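(* Let $q\ge1$, $\lambda$ a primitive $q$th root of unity, $g(z)=\lambda z+O(z^2)$ holomorphic near $0$ with $f:=g^{\circ q}$ of the form $f(z)=z+z^{q+1}+bz^{2q+1}+O(z^{2q+2})$, and $0<r_0<1$ such that $f$ is univalent in a neighborhood of $\overline{\mathbb D}(0,r_0)$, $0$ is its only fixed point in $\overline{\mathbb D}(0,r_0)$ and $\operatorname{Re}(f')>0$ there. Let $g_n(z)=\lambda_nz+O(z^2)$, $|\lambda_n|\ne1$, with $f_n:=g_n^{\circ q}$ holomorphic near $\overline{\mathbb D}(0,r_0)$ and $f_n\to f$ uniformly on $\overline{\mathbb D}(0,r_0)$; for large $n$ the fixed points of $f_n$ in $\overline{\mathbb D}(0,r_0)$ are $0$ and the points of a $q$-cycle $\mathscr O_n$ of $g_n$. Let $0<r_1<r_0/2$ be such that $\overline{\mathbb D}(0,r_1)$ is mapped univalently into $\mathbb D(0,r_0)$ by $f$ and $f^{-1}$ and $\sup_{|z|\le r_1}|f_n(z)-z|\le r_1/2$ for all large $n$. Then there is $0<r_2<r_1$ such that for every $0<r<r_2$ and all sufficiently large $n$ the following holds. Let $z_j:=f_n^{-j}(z_0)$, $0\le j<k\le\infty$, be a (finite or infinite) backward orbit in $\mathbb D(0,r)\setminus(\{0\}\cup\mathscr O_n)$, and let $\eta_j$ be curves in $\mathbb D(0,r)\setminus(\{0\}\cup\mathscr O_n)$ joining $z_{j-1}$ to $z_j$ with $f_n^{-1}(\eta_{j-1})=\eta_j$ for every $2\le j<k$. If $\eta_1$ and $[z_0,z_1]$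 are homotopic in $\mathbb D(0,r)\setminus(\{0\}\cup\mathscr O_n)$, then so are $\eta_j$ and $[z_{j-1},z_j]$ for every $1\le j<k$.
   Context: $f_n^{-1}$ denotes the inverse of the univalent map $f_n$ near $0$. Homotopies are with fixed endpoints. *)

theory Defs
  imports "HOL-Complex_Analysis.Complex_Analysis" "HOL-Library.Landau_Symbols" "HOL-Library.Extended_Nat"
begin

definition primitive_root_of_unity :: "nat \<Rightarrow> complex \<Rightarrow> bool" where
  "primitive_root_of_unity q lam \<longleftrightarrow> lam ^ q = 1 \<and> (\<forall>m. 0 < m \<and> m < q \<longrightarrow> lam ^ m \<noteq> 1)"

definition is_q_cycle :: "(complex \<Rightarrow> complex) \<Rightarrow> nat \<Rightarrow> complex set \<Rightarrow> bool" where
  "is_q_cycle h q C \<longleftrightarrow>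
     (\<exists>w. C = (\<lambda>j. (h ^^ j) w) ` {..<q} \<and> card C = q \<and> (h ^^ q) w = w)"

end

theory Submission
  imports Defs
begin


lemma factor_zeros:
  fixes h :: "complex \<Rightarrow> complex"
  assumes "finite Z" "h holomorphic_on S" "open S" "Z \<subseteq> S" "\<forall>a\<in>Z. h a = 0"
  shows "\<exists>\<phi>. \<phi> holomorphic_on S \<and> (\<forall>x\<in>S. h x = \<phi> x * (\<Prod>a\<in>Z. x - a))"
  using assms(1,4,5)
proof (induction Z rule: finite_induct)
  case empty
  then show ?case using assms(2) by auto
next
  case (insert a Z)
  then obtain \<phi> where ph: "\<phi> holomorphic_on S" "\<forall>x\<in>S. h x = \<phi> x * (\<Prod>a\<in>Z. x - a)" by auto
  have aS: "a \<in> S" using insert by auto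
  have "(\<Prod>b\<in>Z. a - b) \<noteq> 0" using insert(1,2) by (auto simp: prod_zero_iff)
  moreover have "h a = 0" using insert by auto
  ultimately have pa: "\<phi> a = 0" using ph aS by auto
  define \<psi> where "\<psi> = (\<lambda>z. if z = a then deriv \<phi> a else (\<phi> z - \<phi> a) / (z - a))"
  have "\<psi> holomorphic_on S" unfolding \<psi>_def
    by (rule pole_lemma[OF ph(1)]) (simp add: aS assms(3) interior_open)
  moreover have "\<forall>x\<in>S. h x = \<psi> x * (\<Prod>b\<in>insert a Z. x - b)"
  proof
    fix x assume "x \<in> S"
    have "\<phi> x = \<psi> x * (x - a)" using pa by (simp add: \<psi>_def)
    then show "h x = \<psi> x * (\<Prod>b\<in>insert a Z. x - b)"
      using ph(2) \<open>x \<in> S\<close> insert(1,2) by (simp add: prod.insert mult_ac)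
  qed
  ultimately show ?case by blast
qed

lemma seg_avoid:
  fixes F :: "complex \<Rightarrow> complex" and a c d A p :: complex and t :: real
  assumes Fc: "F c = a" and Fd: "F d = c" and FA: "F A = (1 - t) *\<^sub>R a + t *\<^sub>R c"
    and bA: "norm (F A - A) \<le> norm (A - p) / 10"
    and bc: "norm (F c - c) \<le> norm (c - p) / 10"
    and bd: "norm (F d - d) \<le> norm (d - p) / 10"
    and dp: "d \<noteq> p" and t: "0 \<le> t" "t \<le> 1"
  shows "p \<notin> closed_segment A ((1 - t) *\<^sub>R c + t *\<^sub>R d)"
proof
  define B where "B = (1 - t) *\<^sub>R c + t *\<^sub>R d"
  assume "p \<in> closed_segment A ((1 - t) *\<^sub>R c + t *\<^sub>R d)"
  then have pB: "norm (p - B) \<le> norm (B - A)" using segment_bound(2) B_def by blast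
  define hA where "hA = F A - A"
  define hc where "hc = F c - c"
  define hd where "hd = F d - d"
  have dB: "d - B = - ((1 - t) *\<^sub>R hd)" unfolding B_def hd_def using Fd
    by (simp add: algebra_simps)
  have cB: "c - B = t *\<^sub>R hd" unfolding B_def hd_def using Fd
    by (simp add: algebra_simps)
  have AB: "A - B = (1 - t) *\<^sub>R hc + t *\<^sub>R hd - hA"
  proof -
    have "hd = c - d" "hc = a - c" "hA = (1 - t) *\<^sub>R a + t *\<^sub>R c - A"
      using Fd Fc FA hd_def hc_def hA_def by auto
    note eqs = this
    show ?thesis unfolding B_def eqs by (simp add: algebra_simps)
  qed
  have n1: "norm (d - B) \<le> norm hd" unfolding dB using t
    by (simp add: mult_left_le_one_le)
  have n2: "norm (c - B) \<le> norm hd" unfolding cB using t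
    by (simp add: mult_left_le_one_le)
  have n3: "norm (A - B) \<le> norm hc + norm hd + norm hA"
  proof -
    have "norm (A - B) \<le> norm ((1 - t) *\<^sub>R hc) + norm (t *\<^sub>R hd) + norm hA"
      unfolding AB using norm_triangle_ineq4[of "(1 - t) *\<^sub>R hc + t *\<^sub>R hd" hA]
        norm_triangle_ineq[of "(1 - t) *\<^sub>R hc" "t *\<^sub>R hd"] by linarith
    also have "\<dots> \<le> norm hc + norm hd + norm hA" using t
      by (intro add_mono) (auto simp: mult_left_le_one_le)
    finally show ?thesis .
  qed
  have t1: "norm (d - p) \<le> norm (d - B) + norm (B - p)" by (rule norm_diff_triangle_le[OF order_refl order_refl])
  have t2: "norm (c - p) \<le> norm (c - B) + norm (B - p)" by (rule norm_diff_triangle_le[OF order_refl order_refl])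
  have t3: "norm (A - p) \<le> norm (A - B) + norm (B - p)" by (rule norm_diff_triangle_le[OF order_refl order_refl])
  have e: "norm (p - B) = norm (B - p)" by (simp add: norm_minus_commute)
  have hdb: "norm hd \<le> norm (d - p) / 10" using bd hd_def by simp
  have hcb: "norm hc \<le> norm (c - p) / 10" using bc hc_def by simp
  have hAb: "norm hA \<le> norm (A - p) / 10" using bA hA_def by simp
  have "norm (d - p) \<le> 10 / 9 * norm (B - p)" using t1 n1 hdb by linarith
  moreover have "norm (d - p) > 0" using dp by simp
  ultimately have Bp: "norm (B - p) > 0" by linarith
  have "norm (A - B) < norm (B - p)"
    using t1 t2 t3 n1 n2 n3 hdb hcb hAb Bp by linarith
  then show False using pB e by (simp add: norm_minus_commute)
qed



lemma homotopic_paths_shrink: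
  fixes P :: "complex set" and p1 p2 :: "real \<Rightarrow> complex"
  assumes fin: "finite P" and Pr: "P \<subseteq> ball 0 r"
    and hom: "homotopic_paths (- P) p1 p2"
    and i1: "path_image p1 \<subseteq> ball 0 r - P" and i2: "path_image p2 \<subseteq> ball 0 r - P"
  shows "homotopic_paths (ball 0 r - P) p1 p2"
proof -
  have pp: "path p1" "path p2" using hom homotopic_paths_imp_path by blast+
  define K where "K = P \<union> path_image p1 \<union> path_image p2"
  have cK: "compact K" unfolding K_def using fin pp
    by (intro compact_Un finite_imp_compact compact_path_image) auto
  have neK: "K \<noteq> {}" unfolding K_def by (simp add: path_image_nonempty)
  obtain m where mK: "m \<in> K" and mx: "\<forall>y\<in>K. norm y \<le> norm m"
    using continuous_attains_sup[OF cK neK continuous_on_norm_id] by blast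
  have Kr: "K \<subseteq> ball 0 r" unfolding K_def using Pr i1 i2 by auto
  then have mr: "norm m < r" using mK by auto
  define s where "s = (norm m + r) / 2"
  have nm: "0 \<le> norm m" by simp
  have "0 < norm m + r" using mr nm by linarith
  then have s0: "0 < s" unfolding s_def by simp
  have s1: "s < r" using mr unfolding s_def by (simp add: field_simps)
  note s = s0 s1
  have Ks: "\<forall>y\<in>K. norm y < s" using mx mr unfolding s_def by force
  define \<rho> where "\<rho> = (\<lambda>z::complex. (s / max s (norm z)) *\<^sub>R z)"
  have rho_id: "\<rho> z = z" if "norm z \<le> s" for z
    using that s by (simp add: \<rho>_def max_def)
  have cont: "continuous_on (- P) \<rho>" unfolding \<rho>_def using s
    by (intro continuous_intros) auto
  have maps: "\<rho> \<in> (- P) \<rightarrow> ball 0 r - P"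
  proof
    fix z assume z: "z \<in> - P"
    show "\<rho> z \<in> ball 0 r - P"
    proof (cases "norm z \<le> s")
      case True
      then show ?thesis using rho_id z s by auto
    next
      case False
      then have "\<rho> z = (s / norm z) *\<^sub>R z" by (simp add: \<rho>_def)
      moreover have "z \<noteq> 0" using False s by (metis norm_zero less_le_not_le)
      ultimately have nr: "norm (\<rho> z) = s" using False s by simp
      then have "\<rho> z \<notin> P" using Ks unfolding K_def by auto
      then show ?thesis using nr s by auto
    qed
  qed
  have h2: "homotopic_paths (ball 0 r - P) (\<rho> \<circ> p1) (\<rho> \<circ> p2)"
    by (rule homotopic_paths_continuous_image[OF hom cont maps])
  have e1: "homotopic_paths (ball 0 r - P) p1 (\<rho> \<circ> p1)"
  proof (rule homotopic_paths_eq[OF pp(1) i1])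
    fix t :: real assume "t \<in> {0..1}"
    then have "p1 t \<in> K" unfolding K_def path_image_def by auto
    then show "p1 t = (\<rho> \<circ> p1) t" using Ks rho_id by auto
  qed
  have e2: "homotopic_paths (ball 0 r - P) p2 (\<rho> \<circ> p2)"
  proof (rule homotopic_paths_eq[OF pp(2) i2])
    fix t :: real assume "t \<in> {0..1}"
    then have "p2 t \<in> K" unfolding K_def path_image_def by auto
    then show "p2 t = (\<rho> \<circ> p2) t" using Ks rho_id by auto
  qed
  show ?thesis
    using homotopic_paths_trans[OF homotopic_paths_trans[OF e1 h2] homotopic_paths_sym[OF e2]] .
qed

lemma local_inverse:
  fixes F :: "complex \<Rightarrow> complex"
  assumes R: "0 < R" and F0: "F 0 = 0"
    and lip: "\<forall>x\<in>ball 0 R. \<forall>y\<in>ball 0 R. norm ((F x - x) - (F y - y)) \<le> norm (x - y) / 2"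
    and r: "r \<le> R / 4"
  shows "\<exists>g. continuous_on (ball 0 r) g \<and> (\<forall>u\<in>ball 0 r. g u \<in> ball 0 R \<and> F (g u) = u)"
proof -
  have ex: "\<exists>x. x \<in> ball 0 R \<and> F x = u" if u: "u \<in> ball 0 r" for u
  proof -
    define T where "T = (\<lambda>x. u - (F x - x))"
    define S where "S = cball (0::complex) (R / 2)"
    have SR: "S \<subseteq> ball 0 R" unfolding S_def using R by auto
    have "\<exists>!x\<in>S. T x = x"
    proof (rule Banach_fix[of S "1/2"])
      show "complete S" unfolding S_def by (simp add: complete_eq_closed)
      show "S \<noteq> {}" unfolding S_def using R by auto
      show "T ` S \<subseteq> S"
      proof
        fix y assume "y \<in> T ` S"
        then obtain x where x: "x \<in> S" "y = T x" by auto
        have "norm ((F x - x) - (F 0 - 0)) \<le> norm (x - 0) / 2"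
          using lip[rule_format, of x 0] SR x(1) R by auto
        then have "norm (F x - x) \<le> norm x / 2" using F0 by simp
        moreover have "norm x \<le> R / 2" using x(1) S_def by simp
        moreover have "norm u < R / 4" using u r by simp
        ultimately have "norm (T x) \<le> R / 2" unfolding T_def
          using norm_triangle_ineq4[of u "F x - x"] by linarith
        then show "y \<in> S" using x S_def by simp
      qed
      show "dist (T x) (T y) \<le> 1 / 2 * dist x y" if "x \<in> S" "y \<in> S" for x y
      proof -
        have "norm ((F x - x) - (F y - y)) \<le> norm (x - y) / 2" using lip SR that by auto
        moreover have "T x - T y = - ((F x - x) - (F y - y))" unfolding T_def by simp
        ultimately show ?thesis by (simp add: dist_norm norm_minus_commute)
      qed
    qed auto
    then obtain x where "x \<in> S" "T x = x" by auto
    then show ?thesis using SR unfolding T_def by (intro exI[of _ x]) (auto simp: algebra_simps)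
  qed
  define g where "g = (\<lambda>u. SOME x. x \<in> ball 0 R \<and> F x = u)"
  have g: "g u \<in> ball 0 R \<and> F (g u) = u" if "u \<in> ball 0 r" for u
    unfolding g_def using someI_ex[OF ex[OF that]] .
  have lipg: "norm (g u - g v) \<le> 2 * norm (u - v)" if "u \<in> ball 0 r" "v \<in> ball 0 r" for u v
  proof -
    have gu: "g u \<in> ball 0 R" "F (g u) = u" and gv: "g v \<in> ball 0 R" "F (g v) = v"
      using g that by auto
    define D where "D = (F (g u) - g u) - (F (g v) - g v)"
    have "norm D \<le> norm (g u - g v) / 2"
      unfolding D_def using lip[rule_format, of "g u" "g v"] gu(1) gv(1) by blast
    moreover have eq: "g u - g v = (u - v) - D"
      using gu gv unfolding D_def by simp
    moreover have "norm (g u - g v) \<le> norm (u - v) + norm D"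
      unfolding eq by (rule norm_triangle_ineq4)
    ultimately have "norm (g u - g v) \<le> norm (u - v) + norm (g u - g v) / 2" by linarith
    then show ?thesis by linarith
  qed
  have "continuous_on (ball 0 r) g"
    unfolding continuous_on_iff
  proof (intro ballI allI impI)
    fix x :: complex and e assume x: "x \<in> ball 0 r" and e: "(0::real) < e"
    show "\<exists>d>0. \<forall>x'\<in>ball 0 r. dist x' x < d \<longrightarrow> dist (g x') (g x) < e"
    proof (intro exI[of _ "e/2"] conjI ballI impI)
      show "e / 2 > 0" using e by simp
      fix x' :: complex assume "x' \<in> ball 0 r" "dist x' x < e / 2"
      then show "dist (g x') (g x) < e" using lipg[of x' x] x by (simp add: dist_norm)
    qed
  qed
  then show ?thesis using g by blast
qed



lemma prod_le_pow:
  fixes x :: complex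
  assumes "\<forall>a\<in>P. norm (x - a) \<le> c"
  shows "(\<Prod>a\<in>P. norm (x - a)) \<le> c ^ card P"
proof -
  have "(\<Prod>a\<in>P. norm (x - a)) \<le> (\<Prod>a\<in>P. c)"
    using assms by (intro prod_mono) auto
  then show ?thesis by simp
qed

lemma pow_le_prod:
  fixes x :: complex
  assumes "\<forall>a\<in>P. c \<le> norm (x - a)" "0 \<le> c"
  shows "c ^ card P \<le> (\<Prod>a\<in>P. norm (x - a))"
proof -
  have "(\<Prod>a\<in>P. c) \<le> (\<Prod>a\<in>P. norm (x - a))"
    using assms by (intro prod_mono) auto
  then show ?thesis by simp
qed

lemma main_step:
  fixes F :: "complex \<Rightarrow> complex" and P :: "complex set" and q :: nat
    and M R r \<rho> r0 :: real
  assumes F_hol: "F holomorphic_on ball 0 r0"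
    and finP: "finite P" and cardP: "card P = q + 1" and q: "q \<ge> 1"
    and Pr: "P \<subseteq> ball 0 r" and Pfix: "\<forall>p\<in>P. F p = p" and P0: "0 \<in> P"
    and \<rho>: "0 < \<rho>" "\<rho> < r0" "\<rho> \<le> 1/2"
    and R: "0 < R" "R \<le> \<rho>/2" "R * (20 * (M + 1)) \<le> 1"
    and M: "0 \<le> M"
    and sph: "\<forall>x\<in>sphere 0 \<rho>. norm (F x - x) \<le> M * (\<rho>/2) ^ (q + 1)"
    and r: "0 < r" "r \<le> R / 4"
  shows "\<forall>(k :: enat) (z :: nat \<Rightarrow> complex) (\<eta> :: nat \<Rightarrow> real \<Rightarrow> complex).
          (\<forall>j. enat j < k \<longrightarrow> z j \<in> ball 0 r - P) \<longrightarrow>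
          (\<forall>j. 1 \<le> j \<and> enat j < k \<longrightarrow> F (z j) = z (j - 1)) \<longrightarrow>
          (\<forall>j. 1 \<le> j \<and> enat j < k \<longrightarrow>
              path (\<eta> j) \<and> pathstart (\<eta> j) = z (j - 1) \<and> pathfinish (\<eta> j) = z j \<and>
              path_image (\<eta> j) \<subseteq> ball 0 r - P) \<longrightarrow>
          (\<forall>j. 2 \<le> j \<and> enat j < k \<longrightarrow> (\<forall>t\<in>{0..1}. F (\<eta> j t) = \<eta> (j - 1) t)) \<longrightarrow>
          (enat 1 < k \<longrightarrow> homotopic_paths (ball 0 r - P) (\<eta> 1) (linepath (z 0) (z 1))) \<longrightarrow>
          (\<forall>j. 1 \<le> j \<and> enat j < k \<longrightarrow>
              homotopic_paths (ball 0 r - P) (\<eta> j) (linepath (z (j - 1)) (z j)))"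
proof -
  define h where "h = (\<lambda>x. F x - x)"
  have h_hol: "h holomorphic_on ball 0 r0" unfolding h_def
    by (intro holomorphic_intros F_hol)
  have rR: "r < R" using r R by linarith
  have PR: "P \<subseteq> ball 0 R" using Pr rR by auto
  have Rr0: "2 * R < r0" using R \<rho> by linarith
  have Pr0: "P \<subseteq> ball 0 r0" using PR Rr0 R by auto
  obtain \<phi> where \<phi>: "\<phi> holomorphic_on ball 0 r0" "\<forall>x\<in>ball 0 r0. h x = \<phi> x * (\<Prod>a\<in>P. x - a)"
    using factor_zeros[OF finP h_hol open_ball Pr0] Pfix unfolding h_def by auto
  have normh: "norm (h x) = norm (\<phi> x) * (\<Prod>a\<in>P. norm (x - a))" if "x \<in> ball 0 r0" for x
    using \<phi>(2) that by (simp add: norm_mult prod_norm)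
  have cb: "cball 0 \<rho> \<subseteq> ball 0 r0" using \<rho> by auto
  have \<phi>M: "norm (\<phi> x) \<le> M" if "x \<in> cball 0 \<rho>" for x
  proof (rule maximum_modulus_frontier[of \<phi> "cball 0 \<rho>"])
    have "ball 0 \<rho> \<subseteq> ball (0::complex) r0" using cb ball_subset_cball by blast
    then show "\<phi> holomorphic_on interior (cball 0 \<rho>)"
      using holomorphic_on_subset[OF \<phi>(1)] by simp
    show "continuous_on (closure (cball 0 \<rho>)) \<phi>"
      using holomorphic_on_imp_continuous_on[OF holomorphic_on_subset[OF \<phi>(1) cb]] by simp
    show "bounded (cball (0::complex) \<rho>)" by simp
    show "x \<in> cball 0 \<rho>" by fact
    fix w assume "w \<in> frontier (cball (0::complex) \<rho>)"
    then have w: "norm w = \<rho>" using \<rho> by simp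
    have wr0: "w \<in> ball 0 r0" using w \<rho> by simp
    have lowb: "(\<rho>/2) ^ (q+1) \<le> (\<Prod>a\<in>P. norm (w - a))"
    proof -
      have "\<forall>a\<in>P. \<rho>/2 \<le> norm (w - a)"
      proof
        fix a assume "a \<in> P"
        then have "norm a < R" using PR by auto
        moreover have "norm w - norm a \<le> norm (w - a)" by (rule norm_triangle_ineq2)
        ultimately show "\<rho>/2 \<le> norm (w - a)" using w R by linarith
      qed
      from pow_le_prod[OF this] \<rho> cardP show ?thesis by simp
    qed
    have pos: "0 < (\<rho>/2) ^ (q+1)" using \<rho> by simp
    have "norm (\<phi> w) * (\<Prod>a\<in>P. norm (w - a)) \<le> M * (\<rho>/2) ^ (q + 1)"
    proof -
      have "w \<in> sphere 0 \<rho>" using w by simp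
      then have "norm (F w - w) \<le> M * (\<rho>/2) ^ (q + 1)" using sph by blast
      then show ?thesis using normh[OF wr0] unfolding h_def by simp
    qed
    also have "\<dots> \<le> M * (\<Prod>a\<in>P. norm (w - a))"
      using lowb M by (rule mult_left_mono)
    finally have "norm (\<phi> w) * (\<Prod>a\<in>P. norm (w - a)) \<le> M * (\<Prod>a\<in>P. norm (w - a))" .
    then show "norm (\<phi> w) \<le> M"
      using pos lowb by (meson less_le_trans mult_right_le_imp_le)
  qed
  have hb: "norm (h x) \<le> M * (\<Prod>a\<in>P. norm (x - a))" if "x \<in> cball 0 \<rho>" for x
  proof -
    have "x \<in> ball 0 r0" using that cb by blast
    then have "norm (h x) = norm (\<phi> x) * (\<Prod>a\<in>P. norm (x - a))" by (rule normh)
    also have "\<dots> \<le> M * (\<Prod>a\<in>P. norm (x - a))"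
      using \<phi>M[OF that] by (intro mult_right_mono prod_nonneg) auto
    finally show ?thesis .
  qed
  have MR: "M * (2 * R) \<le> 1/10" using R M by (simp add: algebra_simps)
  have R1: "3 * R \<le> 1" using R \<rho> by linarith
  have kappa: "norm (h x) \<le> norm (x - p) / 10" if x: "x \<in> ball 0 R" and p: "p \<in> P" for x p
  proof -
    have xc: "x \<in> cball 0 \<rho>" using x R by auto
    have "(\<Prod>a\<in>P. norm (x - a)) = norm (x - p) * (\<Prod>a\<in>P - {p}. norm (x - a))"
      using prod.remove[OF finP p] by simp
    have "(\<Prod>a\<in>P - {p}. norm (x - a)) \<le> (2 * R) ^ card (P - {p})"
    proof (rule prod_le_pow, rule ballI)
      fix a assume "a \<in> P - {p}"
      then have "norm a < R" using PR by auto
      moreover have "norm (x - a) \<le> norm x + norm a" by (rule norm_triangle_ineq4)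
      ultimately show "norm (x - a) \<le> 2 * R" using x by simp
    qed
    moreover have "card (P - {p}) = q" using cardP finP p by simp
    moreover have "(2 * R) ^ q \<le> 2 * R"
      using power_decreasing[of 1 q "2 * R"] q R R1 by simp
    ultimately have pr: "(\<Prod>a\<in>P - {p}. norm (x - a)) \<le> 2 * R" by simp
    have "(\<Prod>a\<in>P. norm (x - a)) \<le> norm (x - p) * (2 * R)"
      unfolding \<open>(\<Prod>a\<in>P. norm (x - a)) = _\<close> using pr by (rule mult_left_mono) simp
    then have "M * (\<Prod>a\<in>P. norm (x - a)) \<le> M * (norm (x - p) * (2 * R))"
      using M by (rule mult_left_mono)
    then have "norm (h x) \<le> M * (norm (x - p) * (2 * R))"
      using hb[OF xc] by linarith
    also have "\<dots> = (M * (2 * R)) * norm (x - p)" by simp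
    also have "\<dots> \<le> (1/10) * norm (x - p)" using MR by (rule mult_right_mono) simp
    finally show ?thesis by simp
  qed
  have dh: "norm (deriv h x) \<le> 1/2" if x: "x \<in> ball 0 R" for x
  proof -
    have sub: "cball x R \<subseteq> cball 0 \<rho>"
    proof
      fix w assume "w \<in> cball x R"
      then have "norm (w - x) \<le> R" by (simp add: dist_norm norm_minus_commute)
      moreover have "norm w \<le> norm x + norm (w - x)" by (metis norm_triangle_sub)
      ultimately show "w \<in> cball 0 \<rho>" using x R by simp
    qed
    have "norm ((deriv ^^ 1) h x) \<le> fact 1 * (M * (3 * R) ^ (q + 1)) / R ^ 1"
    proof (rule Cauchy_inequality)
      show "h holomorphic_on ball x R"
        using holomorphic_on_subset[OF h_hol] sub cb ball_subset_cball by blast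
      show "continuous_on (cball x R) h"
        using holomorphic_on_imp_continuous_on[OF holomorphic_on_subset[OF h_hol]] sub cb by blast
      show "0 < R" by fact
      fix w assume w: "norm (x - w) = R"
      then have "w \<in> cball x R" by (simp add: dist_norm)
      then have wc: "w \<in> cball 0 \<rho>" using sub by blast
      have "(\<Prod>a\<in>P. norm (w - a)) \<le> (3 * R) ^ card P"
      proof (rule prod_le_pow, rule ballI)
        fix a assume "a \<in> P"
        then have "norm a < R" using PR by auto
        moreover have "norm (w - a) \<le> norm w + norm a" by (rule norm_triangle_ineq4)
        moreover have "norm w \<le> norm x + norm (x - w)" by (metis norm_triangle_sub norm_minus_commute)
        ultimately show "norm (w - a) \<le> 3 * R" using x w by simp
      qed
      then have "M * (\<Prod>a\<in>P. norm (w - a)) \<le> M * (3 * R) ^ (q + 1)"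
        using M cardP by (simp add: mult_left_mono)
      then show "norm (h w) \<le> M * (3 * R) ^ (q + 1)"
        using hb[OF wc] by linarith
    qed
    then have "norm (deriv h x) \<le> M * (3 * R) ^ (q + 1) / R" by simp
    also have "\<dots> = 3 * M * (3 * R) ^ q" using R by (simp add: field_simps)
    also have "\<dots> \<le> 3 * M * (3 * R)"
      using power_decreasing[of 1 q "3 * R"] q R R1 M by (intro mult_left_mono) auto
    also have "\<dots> \<le> 1/2" using R M by (simp add: algebra_simps)
    finally show ?thesis .
  qed
  have lip: "\<forall>x\<in>ball 0 R. \<forall>y\<in>ball 0 R. norm ((F x - x) - (F y - y)) \<le> norm (x - y) / 2"
  proof (intro ballI)
    fix x y assume xy: "x \<in> ball (0::complex) R" "y \<in> ball (0::complex) R"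
    have "norm (h x - h y) \<le> 1/2 * norm (x - y)"
    proof (rule field_differentiable_bound[of "ball 0 R" h "deriv h"])
      show "convex (ball (0::complex) R)" by simp
      fix z assume "z \<in> ball (0::complex) R"
      then have "z \<in> ball 0 r0" using Rr0 R by auto
      then show "(h has_field_derivative deriv h z) (at z within ball 0 R)"
        using holomorphic_derivI[OF h_hol open_ball] by blast
      show "norm (deriv h z) \<le> 1/2" using dh \<open>z \<in> ball 0 R\<close> by blast
    qed (use xy in auto)
    then show "norm ((F x - x) - (F y - y)) \<le> norm (x - y) / 2" unfolding h_def by simp
  qed
  have F0: "F 0 = 0" using Pfix P0 by auto
  obtain g where g: "continuous_on (ball 0 r) g" "\<forall>u\<in>ball 0 r. g u \<in> ball 0 R \<and> F (g u) = u"
    using local_inverse[OF R(1) F0 lip] r by auto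
  have inj: "x = y" if "x \<in> ball 0 R" "y \<in> ball 0 R" "F x = F y" for x y
  proof -
    have "norm ((F x - x) - (F y - y)) \<le> norm (x - y) / 2" using lip that by blast
    then have "norm (x - y) \<le> norm (x - y) / 2" using that(3) by (simp add: norm_minus_commute)
    then show ?thesis by simp
  qed
  define X where "X = ball 0 r - P"
  have gX: "g u \<in> ball 0 R" "F (g u) = u" if "u \<in> ball 0 r" for u using g(2) that by auto
  have rRb: "ball (0::complex) r \<subseteq> ball 0 R" using rR by auto
  have ginv: "g u = x" if "u \<in> ball 0 r" "x \<in> ball 0 r" "F x = u" for u x
    using inj[of "g u" x] gX[OF that(1)] that(2,3) rRb by blast
  have contgX: "continuous_on X g" using continuous_on_subset[OF g(1)] X_def by auto
  have gmaps: "g \<in> X \<rightarrow> - P"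
  proof
    fix x assume x: "x \<in> X"
    then have xb: "x \<in> ball 0 r" "x \<notin> P" using X_def by auto
    show "g x \<in> - P"
    proof
      assume "g x \<in> P"
      then have "F (g x) = g x" using Pfix by auto
      then have "g x = x" using gX[OF xb(1)] by simp
      then show False using xb \<open>g x \<in> P\<close> by simp
    qed
  qed
  show ?thesis
  proof (intro allI impI)
    fix k :: enat and z :: "nat \<Rightarrow> complex" and \<eta> :: "nat \<Rightarrow> real \<Rightarrow> complex"
    assume Hz: "\<forall>j. enat j < k \<longrightarrow> z j \<in> ball 0 r - P"
      and HF: "\<forall>j. 1 \<le> j \<and> enat j < k \<longrightarrow> F (z j) = z (j - 1)"
      and H\<eta>: "\<forall>j. 1 \<le> j \<and> enat j < k \<longrightarrow>
              path (\<eta> j) \<and> pathstart (\<eta> j) = z (j - 1) \<and> pathfinish (\<eta> j) = z j \<and>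
              path_image (\<eta> j) \<subseteq> ball 0 r - P"
      and Hpull: "\<forall>j. 2 \<le> j \<and> enat j < k \<longrightarrow> (\<forall>t\<in>{0..1}. F (\<eta> j t) = \<eta> (j - 1) t)"
      and H1: "enat 1 < k \<longrightarrow> homotopic_paths (ball 0 r - P) (\<eta> 1) (linepath (z 0) (z 1))"
    have main: "enat (Suc m) < k \<longrightarrow> homotopic_paths X (\<eta> (Suc m)) (linepath (z m) (z (Suc m)))" for m
    proof (induction m)
      case 0
      then show ?case using H1 X_def by (simp add: one_enat_def)
    next
      case (Suc m)
      show ?case
      proof
        define j where "j = Suc m"
        assume "enat (Suc (Suc m)) < k"
        then have kSj: "enat (Suc j) < k" using j_def by simp
        have kj: "enat j < k" using kSj by (meson enat_ord_simps(2) lessI order.strict_trans)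
        have km: "enat m < k" using kj j_def by (meson enat_ord_simps(2) lessI order.strict_trans)
        have IH: "homotopic_paths X (\<eta> j) (linepath (z m) (z j))" using Suc kj j_def by simp
        define a where "a = z m"
        define c where "c = z j"
        define d where "d = z (Suc j)"
        have aX: "a \<in> ball 0 r - P" using Hz km a_def by blast
        have cX: "c \<in> ball 0 r - P" using Hz kj c_def by blast
        have dX: "d \<in> ball 0 r - P" using Hz kSj d_def by blast
        have Fc: "F c = a" using HF kj j_def a_def c_def by auto
        have Fd: "F d = c" using HF[rule_format, of "Suc j"] kSj j_def c_def d_def by auto
        have ga: "g a = c" using ginv[of a c] aX cX Fc by blast
        have gc: "g c = d" using ginv[of c d] cX dX Fd by blast
        have \<eta>j: "path (\<eta> j)" "path_image (\<eta> j) \<subseteq> ball 0 r - P"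
          using H\<eta> kj j_def by auto
        have \<eta>Sj: "path (\<eta> (Suc j))" "path_image (\<eta> (Suc j)) \<subseteq> ball 0 r - P"
          using H\<eta>[rule_format, of "Suc j"] kSj j_def by auto
        have pull: "\<eta> (Suc j) t = (g \<circ> \<eta> j) t" if t: "t \<in> {0..1}" for t
        proof -
          have "F (\<eta> (Suc j) t) = \<eta> j t" using Hpull[rule_format, of "Suc j" t] kSj j_def t by auto
          moreover have "\<eta> (Suc j) t \<in> ball 0 r" using \<eta>Sj(2) t unfolding path_image_def by blast
          moreover have "\<eta> j t \<in> ball 0 r" using \<eta>j(2) t unfolding path_image_def by blast
          ultimately show ?thesis using ginv by simp
        qed
        have c0: "homotopic_paths (- P) (\<eta> (Suc j)) (g \<circ> \<eta> j)"
          by (rule homotopic_paths_eq[OF \<eta>Sj(1)]) (use \<eta>Sj(2) pull in auto)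
        have c1: "homotopic_paths (- P) (g \<circ> \<eta> j) (g \<circ> linepath a c)"
          using homotopic_paths_continuous_image[OF IH contgX gmaps] a_def c_def by simp
        have segac: "closed_segment a c \<subseteq> ball 0 r"
          using aX cX by (intro closed_segment_subset) auto
        have segcd: "closed_segment c d \<subseteq> ball 0 r"
          using cX dX by (intro closed_segment_subset) auto
        have c2: "homotopic_paths (- P) (g \<circ> linepath a c) (linepath c d)"
        proof (rule homotopic_paths_linear)
          show "path (g \<circ> linepath a c)"
            using segac by (intro path_continuous_image continuous_on_subset[OF g(1)]) auto
          show "path (linepath c d)" by simp
          show "pathstart (linepath c d) = pathstart (g \<circ> linepath a c)" using ga by (simp add: pathstart_def linepath_def)
          show "pathfinish (linepath c d) = pathfinish (g \<circ> linepath a c)" using gc by (simp add: pathfinish_def linepath_def)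
          fix t :: real assume t: "t \<in> {0..1}"
          define u where "u = linepath a c t"
          have ub: "u \<in> ball 0 r" using linepath_in_path[OF t] segac u_def by blast
          have A: "g u \<in> ball 0 R" "F (g u) = u" using gX[OF ub] by auto
          show "closed_segment ((g \<circ> linepath a c) t) (linepath c d t) \<subseteq> - P"
          proof
            fix w assume w: "w \<in> closed_segment ((g \<circ> linepath a c) t) (linepath c d t)"
            show "w \<in> - P"
            proof
              assume wP: "w \<in> P"
              have "w \<notin> closed_segment (g u) ((1 - t) *\<^sub>R c + t *\<^sub>R d)"
              proof (rule seg_avoid[where F = F and a = a])
                show "F c = a" "F d = c" by fact+
                show "F (g u) = (1 - t) *\<^sub>R a + t *\<^sub>R c" using A u_def by (simp add: linepath_def)
                show "norm (F (g u) - g u) \<le> norm (g u - w) / 10" using kappa[OF A(1) wP] h_def by simp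
                show "norm (F c - c) \<le> norm (c - w) / 10" using kappa[of c w] cX rRb wP h_def by auto
                show "norm (F d - d) \<le> norm (d - w) / 10" using kappa[of d w] dX rRb wP h_def by auto
                show "d \<noteq> w" using dX wP by auto
                show "0 \<le> t" "t \<le> 1" using t by auto
              qed
              then show False using w u_def by (simp add: linepath_def)
            qed
          qed
        qed
        have c3: "homotopic_paths (- P) (\<eta> (Suc j)) (linepath c d)"
          using homotopic_paths_trans[OF homotopic_paths_trans[OF c0 c1] c2] .
        have "path_image (linepath c d) \<subseteq> - P" using homotopic_paths_imp_subset[OF c3] by blast
        then have imcd: "path_image (linepath c d) \<subseteq> ball 0 r - P" using segcd by auto
        have "homotopic_paths (ball 0 r - P) (\<eta> (Suc j)) (linepath c d)"
          by (rule homotopic_paths_shrink[OF finP Pr c3 \<eta>Sj(2) imcd])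
        then show "homotopic_paths X (\<eta> (Suc (Suc m))) (linepath (z (Suc m)) (z (Suc (Suc m))))"
          using X_def j_def c_def d_def by simp
      qed
    qed
    fix j assume j: "1 \<le> j \<and> enat j < k"
    then obtain m where m: "j = Suc m" by (cases j) auto
    show "homotopic_paths (ball 0 r - P) (\<eta> j) (linepath (z (j - 1)) (z j))"
      using main[of m] j m X_def by simp
  qed
qed


theorem corollary4p4:
  fixes q :: nat and lam b :: complex and g :: "complex \<Rightarrow> complex"
    and gn :: "nat \<Rightarrow> complex \<Rightarrow> complex" and lamn :: "nat \<Rightarrow> complex"
    and Orb :: "nat \<Rightarrow> complex set" and r0 r1 :: real
  assumes q: "q \<ge> 1"
    and lam: "primitive_root_of_unity q lam"
    and g_hol: "\<exists>\<epsilon>>0. g holomorphic_on ball 0 \<epsilon>"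
    and g0: "g 0 = 0" and g'0: "deriv g 0 = lam"
    and f_exp: "(\<lambda>z. (g ^^ q) z - (z + z ^ (q + 1) + b * z ^ (2 * q + 1)))
                  \<in> O[at 0](\<lambda>z. z ^ (2 * q + 2))"
    and r0: "0 < r0" "r0 < 1"
    and f_univ: "\<exists>U. open U \<and> cball 0 r0 \<subseteq> U \<and> (g ^^ q) holomorphic_on U \<and> inj_on (g ^^ q) U"
    and f_fix: "\<forall>z\<in>cball 0 r0. (g ^^ q) z = z \<longrightarrow> z = 0"
    and f_deriv: "\<forall>z\<in>cball 0 r0. Re (deriv (g ^^ q) z) > 0"
    and gn_hol: "\<forall>n. \<exists>\<epsilon>>0. gn n holomorphic_on ball 0 \<epsilon>"
    and gn0: "\<forall>n. gn n 0 = 0" and gn'0: "\<forall>n. deriv (gn n) 0 = lamn n"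
    and lamn: "\<forall>n. norm (lamn n) \<noteq> 1"
    and fn_hol: "\<forall>n. \<exists>U. open U \<and> cball 0 r0 \<subseteq> U \<and> (gn n ^^ q) holomorphic_on U"
    and fn_lim: "uniform_limit (cball 0 r0) (\<lambda>n. gn n ^^ q) (g ^^ q) sequentially"
    and fn_fix: "eventually (\<lambda>n. {z \<in> cball 0 r0. (gn n ^^ q) z = z} = insert 0 (Orb n)
                                \<and> 0 \<notin> Orb n \<and> is_q_cycle (gn n) q (Orb n)) sequentially"
    and r1: "0 < r1" "r1 < r0 / 2"
    and r1_f: "(g ^^ q) ` cball 0 r1 \<subseteq> ball 0 r0"
    and r1_finv: "cball 0 r1 \<subseteq> (g ^^ q) ` ball 0 r0"
    and r1_n: "eventually (\<lambda>n. \<forall>z\<in>cball 0 r1. norm ((gn n ^^ q) z - z) \<le> r1 / 2) sequentially"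
  shows "\<exists>r2. 0 < r2 \<and> r2 < r1 \<and>
    (\<forall>r. 0 < r \<and> r < r2 \<longrightarrow>
      eventually (\<lambda>n.
        \<forall>(k :: enat) (z :: nat \<Rightarrow> complex) (\<eta> :: nat \<Rightarrow> real \<Rightarrow> complex).
          (\<forall>j. enat j < k \<longrightarrow> z j \<in> ball 0 r - insert 0 (Orb n)) \<longrightarrow>
          (\<forall>j. 1 \<le> j \<and> enat j < k \<longrightarrow> (gn n ^^ q) (z j) = z (j - 1)) \<longrightarrow>
          (\<forall>j. 1 \<le> j \<and> enat j < k \<longrightarrow>
              path (\<eta> j) \<and> pathstart (\<eta> j) = z (j - 1) \<and> pathfinish (\<eta> j) = z j \<and>
              path_image (\<eta> j) \<subseteq> ball 0 r - insert 0 (Orb n)) \<longrightarrow>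
          (\<forall>j. 2 \<le> j \<and> enat j < k \<longrightarrow> (\<forall>t\<in>{0..1}. (gn n ^^ q) (\<eta> j t) = \<eta> (j - 1) t)) \<longrightarrow>
          (enat 1 < k \<longrightarrow> homotopic_paths (ball 0 r - insert 0 (Orb n)) (\<eta> 1) (linepath (z 0) (z 1))) \<longrightarrow>
          (\<forall>j. 1 \<le> j \<and> enat j < k \<longrightarrow>
              homotopic_paths (ball 0 r - insert 0 (Orb n)) (\<eta> j) (linepath (z (j - 1)) (z j))))
      sequentially)"
proof -
  define f where "f = g ^^ q"
  obtain Uf where Uf: "open Uf" "cball 0 r0 \<subseteq> Uf" "f holomorphic_on Uf"
    using f_univ f_def by auto
  have contf: "continuous_on (cball 0 r0) f"
    using holomorphic_on_imp_continuous_on[OF holomorphic_on_subset[OF Uf(3) Uf(2)]] .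
  have conth: "continuous_on (cball 0 r0) (\<lambda>x. f x - x)"
    by (intro continuous_intros contf)
  have "bounded ((\<lambda>x. f x - x) ` cball 0 r0)"
    by (intro compact_imp_bounded compact_continuous_image conth compact_cball)
  then obtain B0 where B0: "\<forall>x\<in>cball 0 r0. norm (f x - x) \<le> B0"
    by (auto simp: bounded_iff)
  have B0pos: "0 \<le> B0"
  proof -
    have "(0::complex) \<in> cball 0 r0" using r0 by simp
    then have "norm (f 0 - 0) \<le> B0" using B0 by blast
    moreover have "0 \<le> norm (f 0 - 0)" by (rule norm_ge_zero)
    ultimately show ?thesis by linarith
  qed
  define \<rho> where "\<rho> = r0 / 2"
  have \<rho>: "0 < \<rho>" "\<rho> < r0" "\<rho> \<le> 1/2" using r0 unfolding \<rho>_def by auto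
  define M where "M = (B0 + 1) / (\<rho>/2) ^ (q + 1)"
  have Mpos: "0 \<le> M" unfolding M_def using B0pos \<rho> by simp
  have Mprop: "M * (\<rho>/2) ^ (q + 1) = B0 + 1" unfolding M_def using \<rho> by simp
  define R where "R = min (\<rho>/2) (1 / (20 * (M + 1)))"
  have R: "0 < R" "R \<le> \<rho>/2" "R * (20 * (M + 1)) \<le> 1"
  proof -
    show "0 < R" unfolding R_def using \<rho> Mpos by simp
    show "R \<le> \<rho>/2" unfolding R_def by simp
    have "R \<le> 1 / (20 * (M + 1))" unfolding R_def by simp
    then show "R * (20 * (M + 1)) \<le> 1" using Mpos by (simp add: field_simps)
  qed
  define r2 where "r2 = min (R / 4) (r1 / 2)"
  show ?thesis
  proof (intro exI[of _ r2] conjI allI impI)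
    show "0 < r2" unfolding r2_def using R r1 by simp
    show "r2 < r1" unfolding r2_def using r1 by simp
    fix r assume r: "0 < r \<and> r < r2"
    have rR: "r \<le> R / 4" using r unfolding r2_def by simp
    have rr0: "r < r0" using rR R \<rho> by simp
    define K where "K = cball 0 r0 - ball (0::complex) r"
    have cK: "compact K" unfolding K_def by (intro compact_diff) auto
    have "complex_of_real r0 \<in> K" unfolding K_def using rr0 r0 by auto
    then have neK: "K \<noteq> {}" by auto
    have contK: "continuous_on K (\<lambda>x. norm (f x - x))"
      unfolding K_def by (intro continuous_intros continuous_on_subset[OF contf]) auto
    obtain x0 where x0: "x0 \<in> K" "\<forall>y\<in>K. norm (f x0 - x0) \<le> norm (f y - y)"
      using continuous_attains_inf[OF cK neK contK] by blast
    define m where "m = norm (f x0 - x0)"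
    have mpos: "0 < m"
    proof -
      have "x0 \<in> cball 0 r0" "x0 \<noteq> 0" using x0(1) r unfolding K_def by auto
      then have "f x0 \<noteq> x0" using f_fix f_def by auto
      then show ?thesis unfolding m_def by simp
    qed
    have ev2: "eventually (\<lambda>n. \<forall>x\<in>cball 0 r0. dist ((gn n ^^ q) x) (f x) < min 1 m) sequentially"
    proof -
      have "0 < min 1 m" using mpos by simp
      from uniform_limitD[OF fn_lim this] show ?thesis unfolding f_def .
    qed
    show "eventually (\<lambda>n.
        \<forall>(k :: enat) (z :: nat \<Rightarrow> complex) (\<eta> :: nat \<Rightarrow> real \<Rightarrow> complex).
          (\<forall>j. enat j < k \<longrightarrow> z j \<in> ball 0 r - insert 0 (Orb n)) \<longrightarrow>
          (\<forall>j. 1 \<le> j \<and> enat j < k \<longrightarrow> (gn n ^^ q) (z j) = z (j - 1)) \<longrightarrow>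
          (\<forall>j. 1 \<le> j \<and> enat j < k \<longrightarrow>
              path (\<eta> j) \<and> pathstart (\<eta> j) = z (j - 1) \<and> pathfinish (\<eta> j) = z j \<and>
              path_image (\<eta> j) \<subseteq> ball 0 r - insert 0 (Orb n)) \<longrightarrow>
          (\<forall>j. 2 \<le> j \<and> enat j < k \<longrightarrow> (\<forall>t\<in>{0..1}. (gn n ^^ q) (\<eta> j t) = \<eta> (j - 1) t)) \<longrightarrow>
          (enat 1 < k \<longrightarrow> homotopic_paths (ball 0 r - insert 0 (Orb n)) (\<eta> 1) (linepath (z 0) (z 1))) \<longrightarrow>
          (\<forall>j. 1 \<le> j \<and> enat j < k \<longrightarrow>
              homotopic_paths (ball 0 r - insert 0 (Orb n)) (\<eta> j) (linepath (z (j - 1)) (z j))))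
      sequentially"
      using eventually_conj[OF fn_fix ev2]
    proof (rule eventually_mono)
      fix n
      assume A: "({z \<in> cball 0 r0. (gn n ^^ q) z = z} = insert 0 (Orb n)
                  \<and> 0 \<notin> Orb n \<and> is_q_cycle (gn n) q (Orb n)) \<and>
                 (\<forall>x\<in>cball 0 r0. dist ((gn n ^^ q) x) (f x) < min 1 m)"
      define F where "F = gn n ^^ q"
      define P where "P = insert 0 (Orb n)"
      have fixset: "{z \<in> cball 0 r0. F z = z} = P" using A F_def P_def by simp
      have cardO: "card (Orb n) = q" using A unfolding is_q_cycle_def by auto
      then have finO: "finite (Orb n)" using q by (metis card_ge_0_finite le_less_trans less_numeral_extra(1) One_nat_def le_simps(3) Suc_le_eq)
      have finP: "finite P" using finO P_def by simp
      have cardP: "card P = q + 1" using finO cardO A P_def by simp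
      have Pfix: "\<forall>p\<in>P. F p = p" using fixset by blast
      have Pc: "P \<subseteq> cball 0 r0" using fixset by blast
      have close: "dist (F x) (f x) < min 1 m" if "x \<in> cball 0 r0" for x
        using A that F_def by blast
      have Pr: "P \<subseteq> ball 0 r"
      proof
        fix p assume p: "p \<in> P"
        show "p \<in> ball 0 r"
        proof (rule ccontr)
          assume "p \<notin> ball 0 r"
          then have pK: "p \<in> K" using Pc p K_def by auto
          then have "m \<le> norm (f p - p)" using x0(2) m_def by blast
          moreover have "dist (F p) (f p) < m" using close Pc p by fastforce
          ultimately show False using Pfix p by (simp add: dist_norm norm_minus_commute)
        qed
      qed
      have F_hol: "F holomorphic_on ball 0 r0"
      proof -
        obtain U where "open U" "cball 0 r0 \<subseteq> U" "F holomorphic_on U" using fn_hol F_def by blast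
        then show ?thesis using holomorphic_on_subset ball_subset_cball by blast
      qed
      have sph: "\<forall>x\<in>sphere 0 \<rho>. norm (F x - x) \<le> M * (\<rho>/2) ^ (q + 1)"
      proof
        fix x :: complex assume "x \<in> sphere 0 \<rho>"
        then have xc: "x \<in> cball 0 r0" using \<rho> by simp
        have "norm (F x - x) \<le> norm (F x - f x) + norm (f x - x)"
          using norm_triangle_ineq[of "F x - f x" "f x - x"] by simp
        also have "\<dots> \<le> 1 + B0"
        proof -
          have "norm (F x - f x) < 1" using close[OF xc] by (simp add: dist_norm)
          moreover have "norm (f x - x) \<le> B0" using B0 xc by blast
          ultimately show ?thesis by linarith
        qed
        finally show "norm (F x - x) \<le> M * (\<rho>/2) ^ (q + 1)" using Mprop by simp
      qed
      show "\<forall>(k :: enat) (z :: nat \<Rightarrow> complex) (\<eta> :: nat \<Rightarrow> real \<Rightarrow> complex).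
          (\<forall>j. enat j < k \<longrightarrow> z j \<in> ball 0 r - insert 0 (Orb n)) \<longrightarrow>
          (\<forall>j. 1 \<le> j \<and> enat j < k \<longrightarrow> (gn n ^^ q) (z j) = z (j - 1)) \<longrightarrow>
          (\<forall>j. 1 \<le> j \<and> enat j < k \<longrightarrow>
              path (\<eta> j) \<and> pathstart (\<eta> j) = z (j - 1) \<and> pathfinish (\<eta> j) = z j \<and>
              path_image (\<eta> j) \<subseteq> ball 0 r - insert 0 (Orb n)) \<longrightarrow>
          (\<forall>j. 2 \<le> j \<and> enat j < k \<longrightarrow> (\<forall>t\<in>{0..1}. (gn n ^^ q) (\<eta> j t) = \<eta> (j - 1) t)) \<longrightarrow>
          (enat 1 < k \<longrightarrow> homotopic_paths (ball 0 r - insert 0 (Orb n)) (\<eta> 1) (linepath (z 0) (z 1))) \<longrightarrow>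
          (\<forall>j. 1 \<le> j \<and> enat j < k \<longrightarrow>
              homotopic_paths (ball 0 r - insert 0 (Orb n)) (\<eta> j) (linepath (z (j - 1)) (z j)))"
        using main_step[OF F_hol finP cardP q Pr Pfix _ \<rho> R Mpos sph _ rR] r
        unfolding F_def P_def by auto
    qed
  qed
qed

end
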